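(* For every $x\in(0,1/2]$, $$4x(1-x)\log_2\!\left(\frac{1}{x(1-x)}\right)\ \ge\ x\,G(1/x)\ \ge\ x(1-x)\left(4+\log\frac{1}{4x(1-x)}\right),$$ $$2x\log_2(1/x)\ \ge\ x\,G(1/x)\ \ge\ x\left(2+\log\frac{1}{2x}\right),$$ and $\displaystyle\lim_{x\to0^+}\frac{G(1/x)}{\log(1/x)}=1$.
   Context: $\log$ is the natural logarithm. $G:[2,\infty)\to\mathbb{R}$ is defined by $G(2)=2$ and, for $x\in(0,1/2)$, $G(1/x)=\dfrac{\gamma^2e^{\gamma}}{e^{\gamma}(\gamma-1)+1}$, where $\gamma>0$ is the unique solution of $x=\dfrac{e^{\gamma}(\gamma-1)+1}{(e^{\gamma}-1)^2}$. *)

theory Defs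
  imports "HOL-Analysis.Analysis"
begin

definition phi :: "real \<Rightarrow> real" where
  "phi g = (exp g * (g - 1) + 1) / (exp g - 1)^2"

text \<open>G : [2,oo) -> R.  G 2 = 2, and for x in (0,1/2), G(1/x) = g^2 e^g / (e^g (g-1) + 1)
  where g > 0 is the unique solution of x = phi g.  Values below 2 are irrelevant.\<close>
definition G :: "real \<Rightarrow> real" where
  "G y = (if y = 2 then 2
          else (let g = (THE g. g > 0 \<and> 1 / y = phi g)
                in g^2 * exp g / (exp g * (g - 1) + 1)))"

end

theory Submission
  imports Defs "HOL-Real_Asymp.Real_Asymp"
begin

lemma exp_gt_add_one: fixes x :: real assumes "x \<noteq> 0" shows "1 + x < exp x"
proof (cases "1 + x/2 \<ge> 0")
  case True
  have "(1 + x/2)^2 \<le> exp (x/2) ^ 2"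
    using True exp_ge_add_one_self[of "x/2"] by (intro power_mono) auto
  also have "exp (x/2) ^ 2 = exp x" by (simp add: exp_double[symmetric])
  finally have "(1 + x/2)^2 \<le> exp x" .
  moreover have "0 < x^2" using assms by simp
  then have "1 + x < (1 + x/2)^2" by (simp add: power2_eq_square algebra_simps)
  ultimately show ?thesis by linarith
next
  case False
  then have "1 + x < 0" by simp
  then show ?thesis using exp_gt_zero[of x] by linarith
qed

lemma pos_facts: fixes g :: real assumes "g > 0"
  shows "exp g - 1 > 0" "exp g * (g - 1) + 1 > 0" "exp g - 1 - g > 0" "exp g * (exp g - 1 - g) > 0"
proof -
  show "exp g - 1 > 0" using exp_gt_one[OF assms] by simp
  show "exp g - 1 - g > 0" using exp_gt_add_one[of g] assms by simp
  then show "exp g * (exp g - 1 - g) > 0" by simp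
  have "1 - g < exp (-g)" using exp_gt_add_one[of "-g"] assms by simp
  then have "exp g * (1 - g) < exp g * exp (-g)" by simp
  then show "exp g * (g - 1) + 1 > 0" by (simp add: exp_minus algebra_simps)
qed

lemma kfun_pos: fixes g :: real assumes "g > 0" shows "g * (exp g + 1) - 2 * (exp g - 1) > 0"
proof -
  have "(\<lambda>y. y * (exp y + 1) - 2 * (exp y - 1)) 0 < (\<lambda>y. y * (exp y + 1) - 2 * (exp y - 1)) g"
  proof (rule DERIV_pos_imp_increasing_open[OF assms])
    fix y :: real assume y: "0 < y" "y < g"
    have d: "((\<lambda>y. y * (exp y + 1) - 2 * (exp y - 1)) has_real_derivative (1 - exp y + y * exp y)) (at y)"
      by (rule derivative_eq_intros refl | simp add: algebra_simps)+
    have "1 - y < exp (-y)" using exp_gt_add_one[of "-y"] y by simp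
    then have "exp y * (1 - y) < exp y * exp (-y)" by simp
    then have "1 - exp y + y * exp y > 0" by (simp add: exp_minus algebra_simps)
    then show "\<exists>z. ((\<lambda>y. y * (exp y + 1) - 2 * (exp y - 1)) has_real_derivative z) (at y) \<and> z > 0"
      using d by blast
  next
    show "continuous_on {0..g} (\<lambda>y. y * (exp y + 1) - 2 * (exp y - 1))"
      by (intro continuous_intros)
  qed
  then show ?thesis by simp
qed

lemma phi_deriv: assumes g: "g > 0"
  shows "(phi has_real_derivative (- exp g * (g * (exp g + 1) - 2 * (exp g - 1)) / (exp g - 1)^3)) (at g)"
proof -
  note p = pos_facts[OF g]
  have nz: "(exp g - 1)^2 \<noteq> 0" using p by simp
  show ?thesis unfolding phi_def[abs_def]
    apply (rule derivative_eq_intros refl nz)+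
    using p
    apply (simp add: divide_simps)
    apply algebra
    done
qed

lemma phi_deriv_neg: fixes g :: real assumes g: "g > 0"
  shows "- exp g * (g * (exp g + 1) - 2 * (exp g - 1)) / (exp g - 1)^3 < 0"
proof -
  have "exp g * (g * (exp g + 1) - 2 * (exp g - 1)) > 0" using kfun_pos[OF g] by simp
  moreover have "(exp g - 1)^3 > 0" using pos_facts[OF g] by simp
  ultimately show ?thesis by (simp add: divide_neg_pos)
qed

lemma phi_strict_decr: assumes "0 < a" "a < b" shows "phi b < phi a"
proof (rule DERIV_neg_imp_decreasing[OF assms(2)])
  fix x assume "a \<le> x" "x \<le> b"
  then have x: "x > 0" using assms by simp
  show "\<exists>y. (phi has_real_derivative y) (at x) \<and> y < 0"
    using phi_deriv[OF x] phi_deriv_neg[OF x] by blast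
qed

lemma phi_cont: "x > 0 \<Longrightarrow> isCont phi x"
  using phi_deriv DERIV_isCont by blast

lemma phi_lim0: "(phi \<longlongrightarrow> 1/2) (at_right 0)"
  unfolding phi_def by real_asymp

lemma phi_limtop: "(phi \<longlongrightarrow> 0) at_top"
  unfolding phi_def by real_asymp

lemma phi_exists: assumes "0 < x" "x < 1/2" shows "\<exists>g>0. phi g = x"
proof -
  have "eventually (\<lambda>g. phi g > x) (at_right 0)"
    using order_tendstoD(1)[OF phi_lim0, of x] assms by simp
  then obtain a0 where a0: "a0 > 0" "\<And>y. 0 < y \<Longrightarrow> y < a0 \<Longrightarrow> phi y > x"
    unfolding eventually_at_right_field by auto
  define a where "a = a0 / 2"
  have a: "a > 0" "phi a > x" using a0 by (auto simp: a_def)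
  have "eventually (\<lambda>g. phi g < x) at_top"
    using order_tendstoD(2)[OF phi_limtop, of x] assms by simp
  then obtain b0 where b0: "\<And>y. y \<ge> b0 \<Longrightarrow> phi y < x"
    unfolding eventually_at_top_linorder by auto
  define b where "b = max b0 (a + 1)"
  have b: "b > a" "phi b < x" using b0[of b] by (auto simp: b_def)
  have "\<exists>g. a \<le> g \<and> g \<le> b \<and> phi g = x"
    using a b by (intro IVT2) (auto intro!: phi_cont)
  then obtain g where "a \<le> g" "phi g = x" by blast
  then show ?thesis using a by (intro exI[of _ g]) auto
qed

lemma phi_unique: assumes "g > 0" "h > 0" "phi g = phi h" shows "g = h"
  using phi_strict_decr[of g h] phi_strict_decr[of h g] assms by (cases g h rule: linorder_cases) auto

lemma phi_le_half: assumes "g > 0" shows "phi g \<le> 1/2"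
proof -
  have "eventually (\<lambda>y. y < g \<and> y > 0) (at_right 0)"
    using assms unfolding eventually_at_right_field by (auto intro!: exI[of _ g])
  then have "eventually (\<lambda>y. phi g \<le> phi y) (at_right 0)"
    by eventually_elim (auto intro: less_imp_le phi_strict_decr)
  then show "phi g \<le> 1/2"
    by (intro tendsto_lowerbound[OF phi_lim0]) auto
qed

lemma phi_lt_half: assumes "g > 0" shows "phi g < 1/2"
  using phi_strict_decr[of "g/2" g] phi_le_half[of "g/2"] assms by simp

lemma phi_pos: assumes "g > 0" shows "phi g > 0"
  using pos_facts[OF assms] by (simp add: phi_def)


lemma psi_deriv: assumes h: "h > 0"
  shows "((\<lambda>h. h * x + h / (exp h - 1)) has_real_derivative (x - phi h)) (at h)"
proof -
  note p = pos_facts[OF h]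
  have nz: "exp h - 1 \<noteq> 0" using p by simp
  show ?thesis unfolding phi_def
    apply (rule derivative_eq_intros refl nz)+
    using p
    apply (simp add: divide_simps)
    apply algebra
    done
qed

lemma psi_min: assumes g: "g > 0" and h: "h > 0"
  shows "g * phi g + g / (exp g - 1) \<le> h * phi g + h / (exp h - 1)"
proof (cases "g \<le> h")
  case True
  show ?thesis
  proof (rule DERIV_nonneg_imp_increasing_open[OF True, where f = "\<lambda>h. h * phi g + h / (exp h - 1)"])
    fix y assume y: "g < y" "y < h"
    then have "phi y < phi g" using g by (intro phi_strict_decr) auto
    then show "\<exists>z. ((\<lambda>h. h * phi g + h / (exp h - 1)) has_real_derivative z) (at y) \<and> z \<ge> 0"
      using psi_deriv[of y "phi g"] y g by (intro exI[of _ "phi g - phi y"]) auto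
  next
    show "continuous_on {g..h} (\<lambda>h. h * phi g + h / (exp h - 1))"
      using g by (intro continuous_at_imp_continuous_on ballI DERIV_isCont[OF psi_deriv]) auto
  qed
next
  case False
  then have hg: "h \<le> g" by simp
  show ?thesis
  proof (rule DERIV_nonpos_imp_decreasing_open[OF hg, where f = "\<lambda>h. h * phi g + h / (exp h - 1)"])
    fix y assume y: "h < y" "y < g"
    then have "phi g < phi y" using h by (intro phi_strict_decr) auto
    then show "\<exists>z. ((\<lambda>h. h * phi g + h / (exp h - 1)) has_real_derivative z) (at y) \<and> z \<le> 0"
      using psi_deriv[of y "phi g"] y h by (intro exI[of _ "phi g - phi y"]) auto
  next
    show "continuous_on {h..g} (\<lambda>h. h * phi g + h / (exp h - 1))"
      using h by (intro continuous_at_imp_continuous_on ballI DERIV_isCont[OF psi_deriv]) auto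
  qed
qed

lemma F_eq: assumes g: "g > 0"
  shows "g * phi g + g / (exp g - 1) = g^2 * exp g / (exp g - 1)^2"
  using pos_facts[OF g] unfolding phi_def by (simp add: divide_simps) algebra

lemma G_at: assumes "0 < x" "x < 1/2"
  shows "\<exists>g>0. phi g = x \<and> G (1/x) = g^2 * exp g / (exp g * (g - 1) + 1)"
proof -
  have ex: "\<exists>!g. g > 0 \<and> 1 / (1/x) = phi g"
    using phi_exists[OF assms] phi_unique by auto
  define g where "g = (THE g. g > 0 \<and> 1 / (1/x) = phi g)"
  have g: "g > 0 \<and> 1 / (1/x) = phi g" unfolding g_def by (rule theI'[OF ex])
  have "1/x \<noteq> 2" using assms by (auto simp: field_simps)
  then have "G (1/x) = g^2 * exp g / (exp g * (g - 1) + 1)"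
    unfolding G_def g_def by (simp add: Let_def)
  then show ?thesis using g by auto
qed

lemma xG_eq: assumes g: "g > 0"
  shows "phi g * (g^2 * exp g / (exp g * (g - 1) + 1)) = g^2 * exp g / (exp g - 1)^2"
  using pos_facts[OF g] unfolding phi_def by (simp add: divide_simps)


lemma ln_le_half_diff: fixes y :: real assumes "y \<ge> 1" shows "ln y \<le> (y - 1/y) / 2"
proof -
  have "(\<lambda>y. (y - 1/y)/2 - ln y) 1 \<le> (\<lambda>y. (y - 1/y)/2 - ln y) y"
  proof (rule DERIV_nonneg_imp_increasing_open[OF assms])
    fix z :: real assume z: "1 < z" "z < y"
    have d: "((\<lambda>y. (y - 1/y)/2 - ln y) has_real_derivative ((1 + 1/z^2)/2 - 1/z)) (at z)"
      using z by (auto intro!: derivative_eq_intros simp: power2_eq_square field_simps)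
    have "(1 + 1/z^2)/2 - 1/z = (z - 1)^2 / (2 * z^2)" using z by (simp add: field_simps power2_eq_square)
    also have "\<dots> \<ge> 0" by simp
    finally show "\<exists>w. ((\<lambda>y. (y - 1/y)/2 - ln y) has_real_derivative w) (at z) \<and> w \<ge> 0"
      using d by blast
  next
    show "continuous_on {1..y} (\<lambda>y. (y - 1/y)/2 - ln y)"
      by (intro continuous_intros) auto
  qed
  then show ?thesis by simp
qed

lemma bound3: assumes x: "0 < x" "x < 1/2" and g: "g > 0" "phi g = x"
  shows "g^2 * exp g / (exp g - 1)^2 \<le> 2 * x * log 2 (1 / x)"
proof -
  define l where "l = ln (1 / (2*x))"
  have l: "l > 0" using x by (simp add: l_def)
  define h where "h = 2 * l"
  have h: "h > 0" using l by (simp add: h_def)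
  have eh: "exp h = 1 / (4 * x^2)"
  proof -
    have "exp h = exp l ^ 2" using exp_of_nat_mult[of 2 l] by (simp add: h_def)
    also have "exp l = 1 / (2*x)" using x by (simp add: l_def)
    finally show ?thesis by (simp add: power2_eq_square)
  qed
  have "x^2 < (1/2)^2" using x by (intro power_strict_mono) auto
  then have q: "1 - 4 * x^2 > 0" by (simp add: power2_eq_square)
  have "g^2 * exp g / (exp g - 1)^2 = g * phi g + g / (exp g - 1)" using F_eq[OF g(1)] by simp
  also have "\<dots> \<le> h * phi g + h / (exp h - 1)" by (rule psi_min[OF g(1) h])
  also have "\<dots> = h * x + h * (4 * x^2) / (1 - 4 * x^2)"
  proof -
    show ?thesis using q g(2) x by (simp add: eh field_simps)
  qed
  also have "\<dots> \<le> 2 * x * log 2 (1 / x)"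
  proof -
    have "l \<le> (1/(2*x) - 1/(1/(2*x))) / 2" unfolding l_def using x by (intro ln_le_half_diff) simp
    also have "\<dots> = (1 - 4 * x^2) / (4 * x)" using x by (simp add: field_simps power2_eq_square)
    finally have l1: "l \<le> (1 - 4 * x^2) / (4 * x)" .
    have a: "4 * x * l / (1 - 4 * x^2) \<le> 1" using l1 q x by (simp add: field_simps)
    have ln2: "0 < ln (2::real)" "ln (2::real) < 1" using ln_2_less_1 by auto
    have b: "l \<le> l / ln 2" using l ln2 by (simp add: field_simps)
    have lnx: "ln (1/x) = l + ln 2" using x by (simp add: l_def ln_div ln_mult)
    have "h * x + h * (4 * x^2) / (1 - 4 * x^2) = 2 * x * (l + 4 * x * l / (1 - 4 * x^2))"
      by (simp add: h_def field_simps power2_eq_square)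
    also have "\<dots> \<le> 2 * x * (l / ln 2 + 1)" using a b x by (intro mult_left_mono) auto
    also have "\<dots> = 2 * x * log 2 (1 / x)" using ln2 by (simp add: log_def lnx field_simps)
    finally show ?thesis .
  qed
  finally show ?thesis .
qed

lemma bound4_le_2: fixes x :: real assumes x: "0 < x" "x \<le> 1/2"
  shows "x * (2 + ln (1 / (2 * x))) \<le> x * (1 - x) * (4 + ln (1 / (4 * x * (1 - x))))"
proof -
  define K where "K = (\<lambda>y::real. 2 - ln 2 - 4*y + 2*y*ln 2 + y * ln y - (1-y) * ln (1-y))"
  have dK: "(K has_real_derivative (-2 + 2 * ln 2 + ln y + ln (1-y))) (at y)" if "0 < y" "y < 1" for y
    unfolding K_def
    apply (rule derivative_eq_intros refl | use that in simp)+
    done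
  have "K (1/2) \<le> K x"
  proof (rule DERIV_nonpos_imp_decreasing_open[OF x(2)])
    fix y assume y: "x < y" "y < 1/2"
    have y0: "0 < y" "y < 1" using x y by auto
    have "0 \<le> (y - 1/2)^2" by simp
    then have q: "y * (1 - y) \<le> 1/4" by (simp add: power2_eq_square algebra_simps)
    have "ln y + ln (1 - y) = ln (y * (1 - y))" using y0 by (simp add: ln_mult)
    also have "\<dots> \<le> ln (1/4)" using q y0 by (subst ln_le_cancel_iff) auto
    also have "\<dots> = - (2 * ln 2)" using ln_realpow[of 2 2] by (simp add: ln_div)
    finally have "-2 + 2 * ln 2 + ln y + ln (1-y) \<le> 0" by simp
    then show "\<exists>z. (K has_real_derivative z) (at y) \<and> z \<le> 0" using dK[OF y0] by blast
  next
    show "continuous_on {x..1/2} K"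
      using x by (intro continuous_at_imp_continuous_on ballI DERIV_isCont[OF dK]) auto
  qed
  moreover have "K (1/2) = 0" unfolding K_def by (simp add: ln_div)
  ultimately have K0: "K x \<ge> 0" by simp
  have x1: "1 - x > 0" using x by simp
  have e1: "ln (1 / (2 * x)) = - ln 2 - ln x" using x by (simp add: ln_div ln_mult)
  have e2: "ln (1 / (4 * x * (1 - x))) = - (2 * ln 2) - ln x - ln (1 - x)"
    using x x1 ln_realpow[of 2 2] by (simp add: ln_div ln_mult)
  have "x * (1 - x) * (4 + ln (1 / (4 * x * (1 - x)))) - x * (2 + ln (1 / (2 * x))) = x * K x"
    unfolding e1 e2 K_def by (simp add: algebra_simps)
  moreover have "x * K x \<ge> 0" using K0 x by simp
  ultimately show ?thesis by simp
qed

definition cc :: "nat \<Rightarrow> real \<Rightarrow> nat \<Rightarrow> real" where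
  "cc a k n = (if a \<le> n \<and> even (n - a) then k^(n-a) / fact (n-a) else 0)"
definition sc :: "nat \<Rightarrow> real \<Rightarrow> nat \<Rightarrow> real" where
  "sc a k n = (if a \<le> n \<and> odd (n - a) then k^(n-a) / fact (n-a) else 0)"

definition wc :: "nat \<Rightarrow> real" where
  "wc n = - cc 0 5 n + 3 * cc 0 3 n - 2 * cc 0 1 n + sc 1 5 n + 11 * sc 1 3 n - 38 * sc 1 1 n
     - 24 * cc 2 3 n + 24 * cc 2 1 n + 20 * sc 3 3 n + 4 * sc 3 1 n - 8 * cc 4 3 n - 8 * cc 4 1 n"

definition Qm :: "nat \<Rightarrow> real" where
  "Qm m = (let r = real m in 125 * 5^m * (r - 1) + 3^m * (243 + 297 * (r+4) - 216 * (r+4)*(r+3) + 60 * (r+4)*(r+3)*(r+2)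
      - 8 * (r+4)*(r+3)*(r+2)*(r+1)) + (-2 - 38*(r+4) + 24*(r+4)*(r+3) + 4*(r+4)*(r+3)*(r+2) - 8*(r+4)*(r+3)*(r+2)*(r+1)))"

lemma wc_odd: "odd m \<Longrightarrow> wc (m + 4) = 0"
  by (simp add: wc_def cc_def sc_def)

lemma wc_even: "even m \<Longrightarrow> wc (m + 4) = Qm m / fact (m + 4)"
proof -
  assume "even m"
  have f4: "fact (m+4) = (real m + 4) * (real m + 3) * (real m + 2) * (real m + 1) * (fact m :: real)"
    by (simp add: fact_Suc numeral_eq_Suc algebra_simps)
  have f3: "fact (m+3) = (real m + 3) * (real m + 2) * (real m + 1) * (fact m :: real)"
    by (simp add: fact_Suc numeral_eq_Suc algebra_simps)
  have f2: "fact (m+2) = (real m + 2) * (real m + 1) * (fact m :: real)"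
    by (simp add: fact_Suc numeral_eq_Suc algebra_simps)
  have f1: "fact (m+1) = (real m + 1) * (fact m :: real)"
    by (simp add: fact_Suc numeral_eq_Suc algebra_simps)
  have e: "m + 4 - 1 = m + 3" "m + 4 - 2 = m + 2" "m + 4 - 3 = m + 1" "m + 4 - 4 = m" by auto
  have fm: "(fact m :: real) > 0" by simp
  have nz: "real m + 1 \<noteq> 0" "real m + 2 \<noteq> 0" "real m + 3 \<noteq> 0" "real m + 4 \<noteq> 0" "(fact m::real) \<noteq> 0"
    by auto
  show ?thesis using \<open>even m\<close>
    unfolding wc_def cc_def sc_def Qm_def Let_def e
    apply (simp add: f4 f3 f2 f1 power_add)
    apply (simp add: divide_simps nz)
    apply (simp add: algebra_simps)
    done
qed

lemma wc_small: "n < 4 \<Longrightarrow> wc n = 0"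
proof -
  assume "n < 4"
  then have "n = 0 \<or> n = 1 \<or> n = 2 \<or> n = 3" by auto
  then show ?thesis by (elim disjE; simp add: wc_def cc_def sc_def)
qed

lemma Qm_small: "m \<le> 13 \<Longrightarrow> even m \<Longrightarrow> Qm m \<ge> 0"
proof -
  assume "m \<le> 13" "even m"
  then have "m = 0 \<or> m = 2 \<or> m = 4 \<or> m = 6 \<or> m = 8 \<or> m = 10 \<or> m = 12" by presburger
  then show ?thesis by (elim disjE; simp add: Qm_def)
qed

lemma pow_bound: "m \<ge> 14 \<Longrightarrow> 17 * 3^m * (real m + 4)^4 \<le> 125 * 5^m * (real m - 1)"
proof (induction m rule: nat_induct_at_least)
  case base
  then show ?case by simp
next
  case (Suc m)
  have r: "real m \<ge> 14" using Suc by simp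
  have q: "(real m + 5) \<le> (19/18) * (real m + 4)" using r by simp
  have "(real m + 5)^4 \<le> ((19/18) * (real m + 4))^4"
    by (rule power_mono[OF q]) simp
  also have "\<dots> = (19/18)^4 * (real m + 4)^4" by (rule power_mult_distrib)
  finally have q4: "3 * (real m + 5)^4 \<le> 5 * (real m + 4)^4"
  proof -
    have c: "(19/18::real)^4 \<le> 5/3" by (simp add: power_divide)
    have "(19/18)^4 * (real m + 4)^4 \<le> 5/3 * (real m + 4)^4"
      by (rule mult_right_mono[OF c]) (use r in simp)
    then show "(real m + 5)^4 \<le> (19/18)^4 * (real m + 4)^4 \<Longrightarrow> 3 * (real m + 5)^4 \<le> 5 * (real m + 4)^4"
      by linarith
  qed
  have "17 * 3^(Suc m) * (real (Suc m) + 4)^4 = 17 * 3^m * (3 * (real m + 5)^4)"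
    by (simp add: algebra_simps)
  also have "\<dots> \<le> 17 * 3^m * (5 * (real m + 4)^4)"
    using q4 by (intro mult_left_mono) auto
  also have "\<dots> = 5 * (17 * 3^m * (real m + 4)^4)" by simp
  also have "\<dots> \<le> 5 * (125 * 5^m * (real m - 1))" using Suc.IH by (simp add: algebra_simps)
  also have "\<dots> \<le> 125 * 5^(Suc m) * (real (Suc m) - 1)" by simp
  finally show ?case .
qed

lemma Qm_large: "m \<ge> 14 \<Longrightarrow> Qm m \<ge> 0"
proof -
  assume m: "m \<ge> 14"
  define r where "r = real m"
  define n where "n = r + 4"
  have r: "r \<ge> 14" using m by (simp add: r_def)
  have n: "n \<ge> 18" using r by (simp add: n_def)
  have h1: "n^2 * (108 * n - 484) \<ge> 0" using n by simp
  have R3: "243 + 297 * (r+4) - 216 * (r+4)*(r+3) + 60 * (r+4)*(r+3)*(r+2) - 8 * (r+4)*(r+3)*(r+2)*(r+1) \<ge> -8 * (r+4)^4"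
  proof -
    have "243 + 297 * (r+4) - 216 * (r+4)*(r+3) + 60 * (r+4)*(r+3)*(r+2) - 8 * (r+4)*(r+3)*(r+2)*(r+1) + 8 * (r+4)^4
       = n^2 * (108 * n - 484) + 681 * n + 243"
      by (simp add: n_def algebra_simps power2_eq_square power4_eq_xxxx)
    then show ?thesis using h1 n by linarith
  qed
  have h2: "n^4 + 52 * n^3 - 76*n^2 - 6*n - 2 \<ge> 0"
  proof -
    have "n^3 * 52 \<ge> 18 * 52 * n^2" using n by (simp add: power2_eq_square power3_eq_cube)
    moreover have "n^2 \<ge> 18 * n" using n by (simp add: power2_eq_square)
    moreover have "n^4 \<ge> 0" by simp
    ultimately show ?thesis using n by linarith
  qed
  have R1: "(-2 - 38*(r+4) + 24*(r+4)*(r+3) + 4*(r+4)*(r+3)*(r+2) - 8*(r+4)*(r+3)*(r+2)*(r+1)) \<ge> -9 * (r+4)^4"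
  proof -
    have "(-2 - 38*(r+4) + 24*(r+4)*(r+3) + 4*(r+4)*(r+3)*(r+2) - 8*(r+4)*(r+3)*(r+2)*(r+1)) + 9 * (r+4)^4
       = n^4 + 52 * n^3 - 76*n^2 - 6*n - 2"
      by (simp add: n_def algebra_simps power2_eq_square power3_eq_cube power4_eq_xxxx)
    then show ?thesis using h2 by linarith
  qed
  have p: "17 * 3^m * (r + 4)^4 \<le> 125 * 5^m * (r - 1)" using pow_bound[OF m] by (simp add: r_def)
  have three: "(3::real)^m \<ge> 1" by simp
  have "3^m * (243 + 297 * (r+4) - 216 * (r+4)*(r+3) + 60 * (r+4)*(r+3)*(r+2) - 8 * (r+4)*(r+3)*(r+2)*(r+1))
       \<ge> 3^m * (-8 * (r+4)^4)" using R3 by (intro mult_left_mono) auto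
  moreover have "(r+4)^4 \<le> 3^m * (r+4)^4" using mult_right_mono[OF three, of "(r+4)^4"] r by simp
  ultimately show ?thesis using R1 p unfolding Qm_def Let_def r_def[symmetric] by linarith
qed

lemma wc_nonneg: "wc n \<ge> 0"
proof (cases "n < 4")
  case True
  then show ?thesis by (simp add: wc_small)
next
  case False
  then obtain m where n: "n = m + 4" by (metis add.commute le_Suc_ex not_less)
  show ?thesis
  proof (cases "even m")
    case True
    have "Qm m \<ge> 0" using Qm_small[OF _ True] Qm_large by (cases "m \<le> 13") auto
    then show ?thesis using wc_even[OF True] n by simp
  next
    case False
    then show ?thesis using wc_odd n by simp
  qed
qed

lemma cosh_shift_sums:
  fixes k t :: real and a :: nat
  shows "(\<lambda>n. if a \<le> n \<and> even (n - a) then k^(n-a) / fact (n-a) * t^n else 0) sums (t^a * cosh (k*t))"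
proof -
  define f where "f = (\<lambda>n. if a \<le> n \<and> even (n - a) then k^(n-a) / fact (n-a) * t^n else (0::real))"
  have "(\<lambda>n. t^a * (if even n then (k*t)^n /\<^sub>R fact n else 0)) sums (t^a * cosh (k*t))"
    by (intro sums_mult cosh_converges)
  moreover have "(\<lambda>n. t^a * (if even n then (k*t)^n /\<^sub>R fact n else 0)) = (\<lambda>i. f (i + a))"
    by (auto simp: f_def fun_eq_iff power_mult_distrib power_add field_simps)
  ultimately have "(\<lambda>i. f (i + a)) sums (t^a * cosh (k*t))" by simp
  then have "f sums (t^a * cosh (k*t) + (\<Sum>i<a. f i))" by (simp add: sums_iff_shift)
  moreover have "(\<Sum>i<a. f i) = 0" by (auto simp: f_def intro!: sum.neutral)
  ultimately show ?thesis by (simp add: f_def)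
qed

lemma sinh_shift_sums:
  fixes k t :: real and a :: nat
  shows "(\<lambda>n. if a \<le> n \<and> odd (n - a) then k^(n-a) / fact (n-a) * t^n else 0) sums (t^a * sinh (k*t))"
proof -
  define f where "f = (\<lambda>n. if a \<le> n \<and> odd (n - a) then k^(n-a) / fact (n-a) * t^n else (0::real))"
  have "(\<lambda>n. t^a * (if even n then 0 else (k*t)^n /\<^sub>R fact n)) sums (t^a * sinh (k*t))"
    by (intro sums_mult sinh_converges)
  moreover have "(\<lambda>n. t^a * (if even n then 0 else (k*t)^n /\<^sub>R fact n)) = (\<lambda>i. f (i + a))"
    by (auto simp: f_def fun_eq_iff power_mult_distrib power_add field_simps)
  ultimately have "(\<lambda>i. f (i + a)) sums (t^a * sinh (k*t))" by simp
  then have "f sums (t^a * sinh (k*t) + (\<Sum>i<a. f i))" by (simp add: sums_iff_shift)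
  moreover have "(\<Sum>i<a. f i) = 0" by (auto simp: f_def intro!: sum.neutral)
  ultimately show ?thesis by (simp add: f_def)
qed


definition Wf :: "real \<Rightarrow> real" where
  "Wf t = - cosh (5*t) + 3 * cosh (3*t) - 2 * cosh t + t * sinh (5*t) + 11 * t * sinh (3*t) - 38 * t * sinh t
     - 24 * t^2 * cosh (3*t) + 24 * t^2 * cosh t + 20 * t^3 * sinh (3*t) + 4 * t^3 * sinh t
     - 8 * t^4 * cosh (3*t) - 8 * t^4 * cosh t"

lemma if_mult0: "(if P then x else (0::real)) * y = (if P then x * y else 0)" by simp

lemma cc_sums: "(\<lambda>n. cc a k n * t^n) sums (t^a * cosh (k*t))"
  unfolding cc_def if_mult0 by (rule cosh_shift_sums)
lemma sc_sums: "(\<lambda>n. sc a k n * t^n) sums (t^a * sinh (k*t))"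
  unfolding sc_def if_mult0 by (rule sinh_shift_sums)

lemma Wf_sums: "(\<lambda>n. wc n * t^n) sums Wf t"
proof -
  have A: "(\<lambda>n. - (cc 0 5 n * t^n) + 3 * (cc 0 3 n * t^n) - 2 * (cc 0 1 n * t^n) + sc 1 5 n * t^n
      + 11 * (sc 1 3 n * t^n) - 38 * (sc 1 1 n * t^n)
     - 24 * (cc 2 3 n * t^n) + 24 * (cc 2 1 n * t^n) + 20 * (sc 3 3 n * t^n) + 4 * (sc 3 1 n * t^n)
     - 8 * (cc 4 3 n * t^n) - 8 * (cc 4 1 n * t^n)) sums
     (- (t^0 * cosh (5*t)) + 3 * (t^0 * cosh (3*t)) - 2 * (t^0 * cosh (1*t)) + t^1 * sinh (5*t)
      + 11 * (t^1 * sinh (3*t)) - 38 * (t^1 * sinh (1*t))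
     - 24 * (t^2 * cosh (3*t)) + 24 * (t^2 * cosh (1*t)) + 20 * (t^3 * sinh (3*t)) + 4 * (t^3 * sinh (1*t))
     - 8 * (t^4 * cosh (3*t)) - 8 * (t^4 * cosh (1*t)))" (is "?f sums ?s")
    apply (rule sums_diff sums_add)+
    apply (rule sums_mult sums_minus cc_sums sc_sums)+
    done
  have B: "?f = (\<lambda>n. wc n * t^n)" by (rule ext) (simp add: wc_def algebra_simps)
  have C: "?s = Wf t" by (simp add: Wf_def)
  show ?thesis using A unfolding B C .
qed

lemma Wf_nonneg: "t \<ge> 0 \<Longrightarrow> Wf t \<ge> 0"
proof -
  assume t: "t \<ge> 0"
  have "\<And>n. (0::real) \<le> wc n * t^n" using t wc_nonneg by simp
  then show ?thesis using sums_le[OF _ sums_zero Wf_sums[of t]] by blast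
qed

definition Hf :: "real \<Rightarrow> real" where
"Hf g = g^2 * exp g * (exp g - 1)^2 / ((exp g * (g - 1) + 1) * (exp g * (exp g - 1 - g))) - 4 + ln 4
   + ln (exp g * (g - 1) + 1) + ln (exp g * (exp g - 1 - g)) - 4 * ln (exp g - 1)"

definition E2 :: "real \<Rightarrow> real" where "E2 g = (let u = exp g; D = u - 1; A = u*(g-1)+1; B = u*(u-1-g);
   A' = u*g; B' = u*(2*u-2-g) in
   g*u*D^2*(2*D+g*D+2*g*u)*A*B - g^2*u*D^3*(A'*B+A*B') + A*B*D*(A'*B+A*B') - 4*u*A^2*B^2)"

lemma Hf_deriv: assumes g: "g > 0"
  shows "(Hf has_real_derivative (E2 g / ((exp g * (g - 1) + 1)^2 * (exp g * (exp g - 1 - g))^2 * (exp g - 1)))) (at g)"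
proof -
  note p = pos_facts[OF g]
  have nz1: "(exp g * (g - 1) + 1) * (exp g * (exp g - 1 - g)) \<noteq> 0" using p by simp
  show ?thesis
    unfolding Hf_def[abs_def]
    apply (rule derivative_eq_intros refl nz1 p)+
    using p
    apply (simp add: E2_def Let_def divide_simps)
    apply algebra
    done
qed

lemma cosh_k: "cosh (of_nat k * t) = (exp t ^ k + 1 / exp t ^ k) / (2::real)"
  unfolding cosh_def exp_minus exp_of_nat_mult by (simp add: inverse_eq_divide)
lemma sinh_k: "sinh (of_nat k * t) = (exp t ^ k - 1 / exp t ^ k) / (2::real)"
  unfolding sinh_def exp_minus exp_of_nat_mult by (simp add: inverse_eq_divide)

lemma Wf_poly: "2 * exp t ^ 5 * Wf t = (let v = exp t in
  -(v^10+1) + 3*(v^8 + v^2) - 2*(v^6 + v^4) + t*(v^10 - 1) + 11*t*(v^8 - v^2) - 38*t*(v^6 - v^4)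
  - 24*t^2*(v^8 + v^2) + 24*t^2*(v^6+v^4) + 20*t^3*(v^8 - v^2) + 4*t^3*(v^6 - v^4)
  - 8*t^4*(v^8+v^2) - 8*t^4*(v^6+v^4))"
proof -
  define v where "v = exp t"
  have v: "v > 0" by (simp add: v_def)
  have c5: "cosh (5*t) = (v ^ 5 + 1 / v ^ 5) / 2" using cosh_k[of 5 t] by (simp add: v_def)
  have c3: "cosh (3*t) = (v ^ 3 + 1 / v ^ 3) / 2" using cosh_k[of 3 t] by (simp add: v_def)
  have c1: "cosh t = (v + 1 / v) / 2" using cosh_k[of 1 t] by (simp add: v_def)
  have s5: "sinh (5*t) = (v ^ 5 - 1 / v ^ 5) / 2" using sinh_k[of 5 t] by (simp add: v_def)
  have s3: "sinh (3*t) = (v ^ 3 - 1 / v ^ 3) / 2" using sinh_k[of 3 t] by (simp add: v_def)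
  have s1: "sinh t = (v - 1 / v) / 2" using sinh_k[of 1 t] by (simp add: v_def)
  show ?thesis unfolding Wf_def c5 c3 c1 s5 s3 s1 Let_def v_def[symmetric]
    using v by (simp add: field_simps) algebra
qed

lemma E2_Wf: "E2 (2*t) = 2 * exp t ^ 4 * (2 * exp t ^ 5 * Wf t)"
proof -
  define v where "v = exp t"
  have u: "exp (2*t) = v^2" using exp_of_nat_mult[of 2 t] by (simp add: v_def)
  show ?thesis
    unfolding Wf_poly
    unfolding E2_def Let_def u v_def[symmetric]
    by algebra
qed


lemma E2_nonneg: assumes "g \<ge> 0" shows "E2 g \<ge> 0"
proof -
  have "E2 g = E2 (2 * (g/2))" by simp
  also have "\<dots> = 2 * exp (g/2) ^ 4 * (2 * exp (g/2) ^ 5 * Wf (g/2))" by (rule E2_Wf)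
  also have "\<dots> \<ge> 0" using Wf_nonneg[of "g/2"] assms by simp
  finally show ?thesis .
qed

definition Hs :: "real \<Rightarrow> real" where
"Hs g = g^2 * exp g * (exp g - 1)^2 / ((exp g * (g - 1) + 1) * (exp g * (exp g - 1 - g))) - 4
   + ln (4 * (exp g * (g - 1) + 1) * (exp g * (exp g - 1 - g)) / (exp g - 1)^4)"

lemma Hs_lim: "(Hs \<longlongrightarrow> 0) (at_right 0)"
  unfolding Hs_def by real_asymp

lemma Hs_Hf: assumes g: "g > 0" shows "Hs g = Hf g"
proof -
  note p = pos_facts[OF g]
  define A where "A = exp g * (g - 1) + 1"
  define B where "B = exp g * (exp g - 1 - g)"
  define D where "D = exp g - 1"
  have A: "A > 0" and B: "B > 0" and D: "D > 0" using p by (auto simp: A_def B_def D_def)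
  have "ln (4 * A * B / D^4) = ln (4 * A * B) - ln (D^4)" using A B D by (simp add: ln_div)
  also have "ln (4 * A * B) = ln (4 * A) + ln B" using A B by (simp add: ln_mult)
  also have "ln (4 * A) = ln 4 + ln A" using A by (simp add: ln_mult)
  also have "ln (D^4) = 4 * ln D" using D by (simp add: ln_realpow)
  finally have "ln (4 * A * B / D^4) = ln 4 + ln A + ln B - 4 * ln D" .
  then show ?thesis unfolding Hs_def Hf_def unfolding B_def[symmetric] unfolding A_def[symmetric]
    unfolding D_def[symmetric] by simp
qed

lemma Hf_mono: assumes "0 < a" "a \<le> g" shows "Hf a \<le> Hf g"
proof (rule DERIV_nonneg_imp_increasing_open[OF assms(2)])
  fix y assume y: "a < y" "y < g"
  then have y0: "y > 0" using assms by simp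
  note p = pos_facts[OF y0]
  have "E2 y / ((exp y * (y - 1) + 1)^2 * (exp y * (exp y - 1 - y))^2 * (exp y - 1)) \<ge> 0"
    using p E2_nonneg[of y] y0 by simp
  then show "\<exists>z. (Hf has_real_derivative z) (at y) \<and> z \<ge> 0" using Hf_deriv[OF y0] by blast
next
  show "continuous_on {a..g} Hf"
    using assms by (intro continuous_at_imp_continuous_on ballI DERIV_isCont[OF Hf_deriv]) auto
qed

lemma Hf_nonneg: assumes g: "g > 0" shows "Hf g \<ge> 0"
proof -
  have "eventually (\<lambda>a. Hs a \<le> Hf g) (at_right 0)"
  proof -
    have "eventually (\<lambda>a. a < g \<and> a > 0) (at_right 0)"
      using g unfolding eventually_at_right_field by (auto intro!: exI[of _ g])
    then show ?thesis by eventually_elim (simp add: Hs_Hf Hf_mono)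
  qed
  then show ?thesis by (intro tendsto_upperbound[OF Hs_lim]) auto
qed

lemma bound2: assumes g: "g > 0" and x: "x = phi g"
  shows "x * (1 - x) * (4 + ln (1 / (4 * x * (1 - x)))) \<le> g^2 * exp g / (exp g - 1)^2"
proof -
  note p = pos_facts[OF g]
  define A where "A = exp g * (g - 1) + 1"
  define B where "B = exp g * (exp g - 1 - g)"
  define D where "D = exp g - 1"
  have A: "A > 0" and B: "B > 0" and D: "D > 0" using p by (auto simp: A_def B_def D_def)
  have x1: "x = A / D^2" by (simp add: x phi_def A_def D_def)
  have DAB: "D^2 - A = B" by (simp add: A_def B_def D_def power2_eq_square algebra_simps)
  have "1 - A / D^2 = (D^2 - A) / D^2" using D by (simp add: field_simps)
  then have x2: "1 - x = B / D^2" using DAB unfolding x1 by simp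
  have q: "x * (1 - x) = A * B / D^4" unfolding x2 unfolding x1 by (simp add: power2_eq_square power4_eq_xxxx)
  have H: "Hs g \<ge> 0" using Hf_nonneg[OF g] Hs_Hf[OF g] by simp
  have H': "ln (4 * A * B / D^4) \<ge> 4 - g^2 * exp g * D^2 / (A * B)"
    using H unfolding Hs_def unfolding B_def[symmetric] unfolding A_def[symmetric]
    unfolding D_def[symmetric] by linarith
  have l: "ln (1 / (4 * x * (1 - x))) = - ln (4 * A * B / D^4)"
  proof -
    have "4 * x * (1 - x) = 4 * A * B / D^4" using q by simp
    then show ?thesis using A B D by (simp add: ln_div)
  qed
  have "x * (1 - x) * (4 + ln (1 / (4 * x * (1 - x)))) = (A * B / D^4) * (4 - ln (4 * A * B / D^4))"
    using q l by (simp add: mult.assoc)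
  also have "\<dots> \<le> (A * B / D^4) * (g^2 * exp g * D^2 / (A * B))"
    using H' A B D by (intro mult_left_mono) auto
  also have "\<dots> = g^2 * exp g / (exp g - 1)^2"
    using A B D by (simp add: D_def[symmetric] field_simps power4_eq_xxxx power2_eq_square)
  finally show ?thesis .
qed


lemma b1_ge_b3: fixes x :: real assumes x: "0 < x" "x \<le> 1/2"
  shows "2 * x * log 2 (1 / x) \<le> 4 * x * (1 - x) * log 2 (1 / (x * (1 - x)))"
proof -
  have x1: "0 < 1 - x" "1 - x \<le> 1" using x by auto
  have a0: "0 \<le> log 2 (1 / x)" using x by simp
  have ab: "log 2 (1 / x) \<le> log 2 (1 / (x * (1 - x)))"
    using x x1 by (subst log_le_cancel_iff) (auto simp: field_simps)
  have "2 * x \<le> 4 * x * (1 - x)" using x by (simp add: algebra_simps)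
  then have "2 * x * log 2 (1 / x) \<le> 4 * x * (1 - x) * log 2 (1 / x)"
    using a0 by (intro mult_right_mono) auto
  also have "\<dots> \<le> 4 * x * (1 - x) * log 2 (1 / (x * (1 - x)))"
    using ab x x1 by (intro mult_left_mono) auto
  finally show ?thesis .
qed

lemma ineqs_lt: assumes x: "0 < x" "x < 1/2"
  shows "4 * x * (1 - x) * log 2 (1 / (x * (1 - x))) \<ge> x * G (1 / x) \<and>
            x * G (1 / x) \<ge> x * (1 - x) * (4 + ln (1 / (4 * x * (1 - x)))) \<and>
            2 * x * log 2 (1 / x) \<ge> x * G (1 / x) \<and>
            x * G (1 / x) \<ge> x * (2 + ln (1 / (2 * x)))"
proof -
  obtain g where g: "g > 0" "phi g = x" "G (1/x) = g^2 * exp g / (exp g * (g - 1) + 1)"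
    using G_at[OF x] by blast
  have F: "x * G (1/x) = g^2 * exp g / (exp g - 1)^2" using xG_eq[OF g(1)] g by simp
  have i2: "x * G (1 / x) \<ge> x * (1 - x) * (4 + ln (1 / (4 * x * (1 - x))))"
    unfolding F using bound2[OF g(1) g(2)[symmetric]] .
  have i3: "2 * x * log 2 (1 / x) \<ge> x * G (1 / x)" unfolding F using bound3[OF x g(1,2)] .
  have i4: "x * G (1 / x) \<ge> x * (2 + ln (1 / (2 * x)))" using i2 bound4_le_2[of x] x by simp
  have i1: "4 * x * (1 - x) * log 2 (1 / (x * (1 - x))) \<ge> x * G (1 / x)" using i3 b1_ge_b3[of x] x by simp
  show ?thesis using i1 i2 i3 i4 by blast
qed

lemma ineqs_half:
  shows "4 * (1/2) * (1 - 1/2) * log 2 (1 / ((1/2) * (1 - 1/2))) \<ge> (1/2) * G (1 / (1/2::real)) \<and>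
            (1/2) * G (1 / (1/2)) \<ge> (1/2) * (1 - 1/2) * (4 + ln (1 / (4 * (1/2) * (1 - 1/2::real)))) \<and>
            2 * (1/2) * log 2 (1 / (1/2)) \<ge> (1/2) * G (1 / (1/2::real)) \<and>
            (1/2) * G (1 / (1/2)) \<ge> (1/2) * (2 + ln (1 / (2 * (1/2::real))))"
proof -
  have G2: "G 2 = 2" by (simp add: G_def)
  have l4: "log 2 4 = (2::real)"
  proof -
    have "log 2 4 = log 2 ((2::real)^2)" by simp
    also have "\<dots> = 2" by (subst log_nat_power) auto
    finally show ?thesis .
  qed
  show ?thesis by (simp add: G2 l4)
qed

lemma G_bounds_small: assumes x: "0 < x" "x < exp (-2)"
  shows "(2 + ln (1 / (2 * x))) / ln (1 / x) \<le> G (1/x) / ln (1/x)"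
    and "G (1/x) / ln (1/x) \<le> (ln (1/x) + ln (ln (1/x))) * (1 + 1 / (ln (1/x) - x)) / ln (1/x)"
proof -
  define L where "L = ln (1/x)"
  have "ln x < ln (exp (-2))" using x by (subst ln_less_cancel_iff) auto
  then have L2: "L > 2" using x unfolding L_def by (simp add: ln_div)
  have e2: "exp (-2) < (1/2::real)"
  proof -
    have "3 < exp (2::real)" using exp_gt_add_one[of 2] by simp
    then show ?thesis by (simp add: exp_minus field_simps)
  qed
  have xh: "x < 1/2" using x e2 by simp
  have xL: "x < L" using xh L2 by simp
  obtain g where g: "g > 0" "phi g = x" "G (1/x) = g^2 * exp g / (exp g * (g - 1) + 1)"
    using G_at[OF x(1) xh] by blast
  have F: "x * G (1/x) = g^2 * exp g / (exp g - 1)^2" using xG_eq[OF g(1)] g by simp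
  have "x * G (1 / x) \<ge> x * (2 + ln (1 / (2 * x)))" using ineqs_lt[OF x(1) xh] by blast
  then have "G (1/x) \<ge> 2 + ln (1 / (2 * x))" using x by simp
  then show "(2 + ln (1 / (2 * x))) / ln (1 / x) \<le> G (1/x) / ln (1/x)"
    using L2 by (intro divide_right_mono) (auto simp: L_def)
  define h where "h = L + ln L"
  have "ln L > 0" using L2 by simp
  then have h: "h > 0" using L2 unfolding h_def by linarith
  have eh: "exp h = L / x" using L2 x xh by (simp add: h_def exp_add L_def)
  have "x * G (1/x) = g * phi g + g / (exp g - 1)" using F F_eq[OF g(1)] by simp
  also have "\<dots> \<le> h * phi g + h / (exp h - 1)" by (rule psi_min[OF g(1) h])
  also have "\<dots> = x * (h * (1 + 1 / (L - x)))"
  proof -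
    have "L / x - 1 = (L - x) / x" using x by (simp add: field_simps)
    then have "h / (exp h - 1) = x * h / (L - x)" using x xL by (simp add: eh)
    then show ?thesis using g(2) x xL by (simp add: field_simps)
  qed
  finally have "G (1/x) \<le> h * (1 + 1 / (L - x))" using x by simp
  then show "G (1/x) / ln (1/x) \<le> (ln (1/x) + ln (ln (1/x))) * (1 + 1 / (ln (1/x) - x)) / ln (1/x)"
    using L2 by (intro divide_right_mono) (auto simp: L_def h_def)
qed

lemma G_lim: "((\<lambda>x. G (1 / x) / ln (1 / x)) \<longlongrightarrow> 1) (at_right 0)"
proof -
  have ev: "eventually (\<lambda>x. 0 < x \<and> x < exp (-2)) (at_right (0::real))"
    unfolding eventually_at_right_field by (auto intro!: exI[of _ "exp (-2)"])
  have l1: "eventually (\<lambda>x. (2 + ln (1 / (2 * x))) / ln (1 / x) \<le> G (1 / x) / ln (1 / x)) (at_right 0)"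
    using ev by eventually_elim (rule G_bounds_small(1), auto)
  have l2: "eventually (\<lambda>x. G (1 / x) / ln (1 / x) \<le> (ln (1/x) + ln (ln (1/x))) * (1 + 1 / (ln (1/x) - x)) / ln (1/x)) (at_right 0)"
    using ev by eventually_elim (rule G_bounds_small(2), auto)
  have t1: "((\<lambda>x::real. (2 + ln (1 / (2 * x))) / ln (1 / x)) \<longlongrightarrow> 1) (at_right 0)"
    by real_asymp
  have t2: "((\<lambda>x::real. (ln (1/x) + ln (ln (1/x))) * (1 + 1 / (ln (1/x) - x)) / ln (1/x)) \<longlongrightarrow> 1) (at_right 0)"
    by real_asymp
  show ?thesis by (rule tendsto_sandwich[OF l1 l2 t1 t2])
qed

theorem corollary3p1:
  shows "(\<forall>x::real. 0 < x \<and> x \<le> 1/2 \<longrightarrow>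
            4 * x * (1 - x) * log 2 (1 / (x * (1 - x))) \<ge> x * G (1 / x) \<and>
            x * G (1 / x) \<ge> x * (1 - x) * (4 + ln (1 / (4 * x * (1 - x)))) \<and>
            2 * x * log 2 (1 / x) \<ge> x * G (1 / x) \<and>
            x * G (1 / x) \<ge> x * (2 + ln (1 / (2 * x))))
       \<and> ((\<lambda>x. G (1 / x) / ln (1 / x)) \<longlongrightarrow> 1) (at_right 0)"
proof (rule conjI)
  show "\<forall>x::real. 0 < x \<and> x \<le> 1/2 \<longrightarrow>
            4 * x * (1 - x) * log 2 (1 / (x * (1 - x))) \<ge> x * G (1 / x) \<and>
            x * G (1 / x) \<ge> x * (1 - x) * (4 + ln (1 / (4 * x * (1 - x)))) \<and>
            2 * x * log 2 (1 / x) \<ge> x * G (1 / x) \<and>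
            x * G (1 / x) \<ge> x * (2 + ln (1 / (2 * x)))"
  proof (intro allI impI)
    fix x :: real assume x: "0 < x \<and> x \<le> 1/2"
    show "4 * x * (1 - x) * log 2 (1 / (x * (1 - x))) \<ge> x * G (1 / x) \<and>
            x * G (1 / x) \<ge> x * (1 - x) * (4 + ln (1 / (4 * x * (1 - x)))) \<and>
            2 * x * log 2 (1 / x) \<ge> x * G (1 / x) \<and>
            x * G (1 / x) \<ge> x * (2 + ln (1 / (2 * x)))"
    proof (cases "x = 1/2")
      case True
      from ineqs_half show ?thesis unfolding True .
    next
      case False
      then show ?thesis using ineqs_lt[of x] x by simp
    qed
  qed
next
  show "((\<lambda>x. G (1 / x) / ln (1 / x)) \<longlongrightarrow> 1) (at_right 0)" by (rule G_lim)
qed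

end
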